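(* Let $0<\alpha<1/2$, $p=n^{-\alpha}$, fix an integer $l\ge 1$, set $m=\lfloor (n-1)/(l+2)\rfloor$, and fix (for each $n$) a family of pairwise disjoint sets of coordinates $A,B,C_1,\dots,C_l\subset\{1,\dots,n\}$, each of size $m$. Call a vertex $v$ of $H_{n,p}$ good if there are at least $2m$ distinct vertices $w$ such that $w$ differs from $v$ in exactly two coordinates, both belonging to $A$, and $d_{H_{n,p}}(v,w)=2$. Then, with probability tending to $1$ as $n\to\infty$, every vertex $v$ of $H_n$ has a good vertex $u$ that differs from $v$ in exactly one coordinate, that coordinate belonging to $B$.
   Context: $H_n$ is the hypercube graph on $\{0,1\}^n$ (vectors adjacent iff they differ in exactly one coordinate). $H_{n,p}$ is obtained from $H_n$ by Bernoulli bond percolation: each edge is kept independently with probability $p$; $d_{H_{n,p}}$ denotes the graph distance in $H_{n,p}$. *)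

theory Defs
  imports "HOL-Probability.Probability" "HOL-Library.Extended_Nat"
begin

text \<open>Vertices of the hypercube H_n: a vector in {0,1}^n is encoded as the set of
coordinates (from {0..<n}) where it equals 1.\<close>
definition hc_vertices :: "nat \<Rightarrow> nat set set" where
  "hc_vertices n = {x. x \<subseteq> {0..<n}}"

definition hc_diff :: "nat set \<Rightarrow> nat set \<Rightarrow> nat set" where
  "hc_diff x y = (x - y) \<union> (y - x)"

definition hc_edges :: "nat \<Rightarrow> nat set set set" where
  "hc_edges n = {{x, y} | x y. x \<in> hc_vertices n \<and> y \<in> hc_vertices n \<and> card (hc_diff x y) = 1}"

text \<open>Bond percolation: each edge independently open with probability p.
  A configuration is a function from edges to bool (True = kept).\<close>
definition percolation :: "nat \<Rightarrow> real \<Rightarrow> (nat set set \<Rightarrow> bool) pmf" where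
  "percolation n p = Pi_pmf (hc_edges n) False (\<lambda>_. bernoulli_pmf p)"

definition perc_adj :: "nat \<Rightarrow> (nat set set \<Rightarrow> bool) \<Rightarrow> nat set \<Rightarrow> nat set \<Rightarrow> bool" where
  "perc_adj n \<omega> x y \<longleftrightarrow> {x, y} \<in> hc_edges n \<and> \<omega> {x, y}"

definition perc_dist :: "nat \<Rightarrow> (nat set set \<Rightarrow> bool) \<Rightarrow> nat set \<Rightarrow> nat set \<Rightarrow> enat" where
  "perc_dist n \<omega> x y =
     (if \<exists>k. (perc_adj n \<omega> ^^ k) x y then enat (LEAST k. (perc_adj n \<omega> ^^ k) x y) else \<infinity>)"

definition good_vertex :: "nat \<Rightarrow> (nat set set \<Rightarrow> bool) \<Rightarrow> nat set \<Rightarrow> nat \<Rightarrow> nat set \<Rightarrow> bool" where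
  "good_vertex n \<omega> A m v \<longleftrightarrow>
     card {w \<in> hc_vertices n. card (hc_diff v w) = 2 \<and> hc_diff v w \<subseteq> A \<and> perc_dist n \<omega> v w = 2} \<ge> 2 * m"

end

theory Submission
  imports Defs "HOL-Real_Asymp.Real_Asymp"
begin


definition flip :: "nat set \<Rightarrow> nat \<Rightarrow> nat set" where
  "flip u i = (if i \<in> u then u - {i} else insert i u)"

lemma hc_diff_sym: "hc_diff x y = hc_diff y x"
  unfolding hc_diff_def by auto

lemma hc_diff_tri: "hc_diff a c \<subseteq> hc_diff a b \<union> hc_diff b c"
  unfolding hc_diff_def by auto

lemma diff_flip: "hc_diff u (flip u i) = {i}"
  unfolding hc_diff_def flip_def by auto

lemma diff_flip2: "i \<noteq> j \<Longrightarrow> hc_diff u (flip (flip u i) j) = {i, j}"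
  unfolding hc_diff_def flip_def by auto

lemma diff_flip_flip: "i \<noteq> j \<Longrightarrow> i \<in> hc_diff (flip v i) (flip v j)"
  unfolding hc_diff_def flip_def by auto

lemma diff_empty_iff: "hc_diff x y = {} \<longleftrightarrow> x = y"
  unfolding hc_diff_def by auto

lemma flip_vertex: "u \<in> hc_vertices n \<Longrightarrow> i < n \<Longrightarrow> flip u i \<in> hc_vertices n"
  unfolding hc_vertices_def flip_def by auto

lemma finite_vertices: "finite (hc_vertices n)"
  unfolding hc_vertices_def by auto

lemma card_vertices: "card (hc_vertices n) = 2 ^ n"
proof -
  have "hc_vertices n = Pow {0..<n}" unfolding hc_vertices_def by auto
  thus ?thesis by (simp add: card_Pow)
qed

lemma finite_edges: "finite (hc_edges n)"
proof -
  have "hc_edges n \<subseteq> Pow (hc_vertices n)" unfolding hc_edges_def by auto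
  thus ?thesis using finite_vertices by (meson finite_Pow_iff finite_subset)
qed

lemma edgeI: "x \<in> hc_vertices n \<Longrightarrow> y \<in> hc_vertices n \<Longrightarrow> card (hc_diff x y) = 1 \<Longrightarrow> {x, y} \<in> hc_edges n"
  unfolding hc_edges_def by blast

lemma edge_card: "{x, y} \<in> hc_edges n \<Longrightarrow> card (hc_diff x y) = 1"
  unfolding hc_edges_def by (auto simp: doubleton_eq_iff hc_diff_sym)

lemma edge_flip: "u \<in> hc_vertices n \<Longrightarrow> i < n \<Longrightarrow> {u, flip u i} \<in> hc_edges n"
  by (intro edgeI flip_vertex) (auto simp: diff_flip)

lemma edge_nonempty: "e \<in> hc_edges n \<Longrightarrow> \<exists>x. x \<in> e"
  unfolding hc_edges_def by auto

lemma dist_two: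
  assumes u: "u \<in> hc_vertices n" and y: "y \<in> hc_vertices n" and w: "w \<in> hc_vertices n"
    and uy: "card (hc_diff u y) = 1" and yw: "card (hc_diff y w) = 1" and uw: "card (hc_diff u w) = 2"
    and o1: "\<omega> {u, y}" and o2: "\<omega> {y, w}"
  shows "perc_dist n \<omega> u w = 2"
proof -
  let ?R = "perc_adj n \<omega>"
  have R1: "?R u y" unfolding perc_adj_def using edgeI[OF u y uy] o1 by auto
  have R2: "?R y w" unfolding perc_adj_def using edgeI[OF y w yw] o2 by auto
  have P2: "(?R ^^ 2) u w" using R1 R2 by (auto simp: numeral_2_eq_2 relcompp.simps)
  have n0: "\<not> (?R ^^ 0) u w" using uw diff_empty_iff[of w w] by auto
  have n1: "\<not> (?R ^^ 1) u w" using uw edge_card[of u w n] unfolding perc_adj_def by auto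
  have "(LEAST k. (?R ^^ k) u w) = 2"
  proof (rule Least_equality)
    show "(?R ^^ 2) u w" by fact
    show "2 \<le> k" if "(?R ^^ k) u w" for k
    proof (rule ccontr)
      assume "\<not> 2 \<le> k"
      hence "k = 0 \<or> k = 1" by auto
      thus False using n0 n1 that by auto
    qed
  qed
  thus ?thesis unfolding perc_dist_def using P2 by (auto simp: numeral_eq_enat)
qed



definition Ev :: "(nat \<Rightarrow> nat) \<Rightarrow> nat \<Rightarrow> nat set \<Rightarrow> (nat set set \<Rightarrow> bool) \<Rightarrow> bool" where
  "Ev \<phi> m u \<omega> = (\<forall>j\<in>{m div 2..<m}. \<forall>r\<in>{0..<(4::nat)}. \<exists>i\<in>{r*(m div 8)..<(r+1)*(m div 8)}.
      \<omega> {u, flip u (\<phi> i)} \<and> \<omega> {flip u (\<phi> i), flip (flip u (\<phi> i)) (\<phi> j)})"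

lemma Ev_good:
  assumes u: "u \<in> hc_vertices n" and A: "A \<subseteq> {0..<n}" and phi: "bij_betw \<phi> {0..<m} A"
    and E: "Ev \<phi> m u \<omega>"
  shows "good_vertex n \<omega> A m u"
proof -
  define t where "t = m div 8"
  define J where "J = {m div 2..<m}"
  define W where "W = {w \<in> hc_vertices n. card (hc_diff u w) = 2 \<and> hc_diff u w \<subseteq> A \<and> perc_dist n \<omega> u w = 2}"
  have "\<forall>jr \<in> J \<times> {0..<4}. \<exists>i. i \<in> {snd jr * t ..< (snd jr + 1) * t} \<and>
      \<omega> {u, flip u (\<phi> i)} \<and> \<omega> {flip u (\<phi> i), flip (flip u (\<phi> i)) (\<phi> (fst jr))}"
  proof
    fix jr assume "jr \<in> J \<times> {0..<(4::nat)}"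
    hence jr: "fst jr \<in> {m div 2..<m}" "snd jr \<in> {0..<4}" by (auto simp: J_def mem_Times_iff)
    from E[unfolded Ev_def, rule_format, OF jr] show "\<exists>i. i \<in> {snd jr * t ..< (snd jr + 1) * t} \<and>
      \<omega> {u, flip u (\<phi> i)} \<and> \<omega> {flip u (\<phi> i), flip (flip u (\<phi> i)) (\<phi> (fst jr))}"
      unfolding t_def by blast
  qed
  then obtain I where I: "\<And>jr. jr \<in> J \<times> {0..<4} \<Longrightarrow> I jr \<in> {snd jr * t ..< (snd jr + 1) * t} \<and>
      \<omega> {u, flip u (\<phi> (I jr))} \<and> \<omega> {flip u (\<phi> (I jr)), flip (flip u (\<phi> (I jr))) (\<phi> (fst jr))}"
    by metis
  define g where "g jr = flip (flip u (\<phi> (I jr))) (\<phi> (fst jr))" for jr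
  have inj: "inj_on \<phi> {0..<m}" and img: "\<phi> ` {0..<m} = A" using phi by (auto simp: bij_betw_def)
  have Ilt: "I jr < m div 2" and Ige: "snd jr * t \<le> I jr" and Ilt2: "I jr < (snd jr + 1) * t"
    if "jr \<in> J \<times> {0..<4}" for jr
  proof -
    have "snd jr \<le> 3" using that by auto
    hence "(snd jr + 1) * t \<le> 4 * t" by simp
    also have "4 * t \<le> m div 2" unfolding t_def by linarith
    finally show "I jr < m div 2" using I[OF that] by auto
    show "snd jr * t \<le> I jr" "I jr < (snd jr + 1) * t" using I[OF that] by auto
  qed
  have jr_props: "\<phi> (I jr) \<in> A \<and> \<phi> (fst jr) \<in> A \<and> \<phi> (I jr) \<noteq> \<phi> (fst jr)" if "jr \<in> J \<times> {0..<4}" for jr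
  proof -
    have a: "I jr \<in> {0..<m}" using Ilt[OF that] by auto
    have b: "fst jr \<in> {0..<m}" "fst jr \<ge> m div 2" using that unfolding J_def by auto
    have "I jr \<noteq> fst jr" using Ilt[OF that] b by auto
    thus ?thesis using a b img inj by (auto simp: inj_on_eq_iff)
  qed
  have gW: "g jr \<in> W" if jr: "jr \<in> J \<times> {0..<4}" for jr
  proof -
    let ?a = "\<phi> (I jr)" and ?b = "\<phi> (fst jr)"
    have ab: "?a \<in> A" "?b \<in> A" "?a \<noteq> ?b" using jr_props[OF jr] by auto
    have an: "?a < n" "?b < n" using ab A by auto
    have y: "flip u ?a \<in> hc_vertices n" using flip_vertex[OF u an(1)] .
    have w: "g jr \<in> hc_vertices n" unfolding g_def using flip_vertex[OF y an(2)] .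
    have d: "hc_diff u (g jr) = {?a, ?b}" unfolding g_def using diff_flip2[OF ab(3)] .
    have c2: "card (hc_diff u (g jr)) = 2" using d ab(3) by simp
    have "perc_dist n \<omega> u (g jr) = 2"
      by (rule dist_two[OF u y w _ _ c2]) (use I[OF jr] in \<open>auto simp: diff_flip g_def\<close>)
    thus ?thesis unfolding W_def using w c2 d ab by auto
  qed
  have ginj: "inj_on g (J \<times> {0..<4})"
  proof (rule inj_onI)
    fix x y assume x: "x \<in> J \<times> {0..<4}" and y: "y \<in> J \<times> {0..<4}" and gxy: "g x = g y"
    have "{\<phi> (I x), \<phi> (fst x)} = {\<phi> (I y), \<phi> (fst y)}"
      using gxy jr_props[OF x] jr_props[OF y] diff_flip2 unfolding g_def by metis
    moreover have "I x \<in> {0..<m}" "I y \<in> {0..<m}" "fst x \<in> {0..<m}" "fst y \<in> {0..<m}"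
      using Ilt[OF x] Ilt[OF y] x y unfolding J_def by auto
    moreover have "I x \<noteq> fst y" "I y \<noteq> fst x" using Ilt[OF x] Ilt[OF y] x y unfolding J_def by auto
    ultimately have e: "I x = I y" "fst x = fst y"
      using inj by (auto simp: doubleton_eq_iff inj_on_eq_iff)
    have "t > 0" using Ige[OF x] Ilt2[OF x] by (cases t) auto
    hence "I x div t = snd x" "I y div t = snd y"
      using Ige[OF x] Ilt2[OF x] Ige[OF y] Ilt2[OF y]
      by (auto intro!: div_nat_eqI simp: mult.commute)
    hence "snd x = snd y" using e by simp
    thus "x = y" using e by (simp add: prod_eq_iff)
  qed
  have "2 * m \<le> card (J \<times> {0..<4::nat})" unfolding J_def by (simp add: card_cartesian_product)
  also have "\<dots> = card (g ` (J \<times> {0..<4}))" using ginj by (simp add: card_image)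
  also have "\<dots> \<le> card W"
    by (rule card_mono) (use gW finite_vertices[of n] in \<open>auto simp: W_def\<close>)
  finally show ?thesis unfolding good_vertex_def W_def .
qed



lemma prob_pair_times:
  "measure_pmf.prob (pair_pmf M N) (A \<times> B) = measure_pmf.prob M A * measure_pmf.prob N B"
proof -
  have "measure_pmf.prob (pair_pmf M N) (A \<times> B) = measure_pmf.prob (pair_pmf M N) ((A \<times> B) \<inter> set_pmf (pair_pmf M N))"
    by (rule measure_Int_set_pmf[symmetric])
  also have "(A \<times> B) \<inter> set_pmf (pair_pmf M N) = (A \<inter> set_pmf M) \<times> (B \<inter> set_pmf N)" by auto
  also have "measure_pmf.prob (pair_pmf M N) \<dots> = measure_pmf.prob M (A \<inter> set_pmf M) * measure_pmf.prob N (B \<inter> set_pmf N)"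
    by (intro measure_pmf_prob_product) auto
  finally show ?thesis by (simp add: measure_Int_set_pmf)
qed

lemma Pi_pmf_prob_split:
  fixes p :: "'a \<Rightarrow> 'b pmf"
  assumes fin: "finite I" and DI: "D \<subseteq> I"
    and P: "\<And>f g. (\<forall>x\<in>D. f x = g x) \<Longrightarrow> P f = P g"
    and R: "\<And>f g. (\<forall>x\<in>I-D. f x = g x) \<Longrightarrow> R f = R g"
  shows "measure_pmf.prob (Pi_pmf I dflt p) {f. P f \<and> R f} =
         measure_pmf.prob (Pi_pmf I dflt p) {f. P f} * measure_pmf.prob (Pi_pmf I dflt p) {f. R f}"
proof -
  define h where "h = (\<lambda>(f::'a\<Rightarrow>'b,g::'a\<Rightarrow>'b) x. if x \<in> D then f x else g x)"
  define M where "M = pair_pmf (Pi_pmf D dflt p) (Pi_pmf (I-D) dflt p)"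
  have eq: "Pi_pmf I dflt p = map_pmf h M"
  proof -
    have fD: "finite D" using fin DI finite_subset by blast
    have "Pi_pmf (D \<union> (I - D)) dflt p = map_pmf h M" unfolding h_def M_def
      by (rule Pi_pmf_union) (use fin fD in auto)
    moreover have "D \<union> (I - D) = I" using DI by auto
    ultimately show ?thesis by simp
  qed
  have hP: "P (h (f,g)) = P f" for f g by (rule P) (auto simp: h_def)
  have hR: "R (h (f,g)) = R g" for f g by (rule R) (auto simp: h_def)
  have 1: "h -` {f. P f \<and> R f} = {f. P f} \<times> {g. R g}" using hP hR by auto
  have 2: "h -` {f. P f} = {f. P f} \<times> UNIV" using hP by auto
  have 3: "h -` {f. R f} = UNIV \<times> {g. R g}" using hR by auto
  have a: "measure_pmf.prob (Pi_pmf I dflt p) {f. P f \<and> R f} =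
      measure_pmf.prob (Pi_pmf D dflt p) {f. P f} * measure_pmf.prob (Pi_pmf (I-D) dflt p) {g. R g}"
    by (simp only: eq measure_map_pmf 1 M_def prob_pair_times)
  have b: "measure_pmf.prob (Pi_pmf I dflt p) {f. P f} = measure_pmf.prob (Pi_pmf D dflt p) {f. P f}"
  proof -
    have "measure_pmf.prob (Pi_pmf I dflt p) {f. P f} =
        measure_pmf.prob (Pi_pmf D dflt p) {f. P f} * measure_pmf.prob (Pi_pmf (I-D) dflt p) UNIV"
      by (simp only: eq measure_map_pmf 2 M_def prob_pair_times)
    thus ?thesis by (metis measure_pmf.prob_space space_measure_pmf mult_1_right)
  qed
  have c: "measure_pmf.prob (Pi_pmf I dflt p) {f. R f} = measure_pmf.prob (Pi_pmf (I-D) dflt p) {f. R f}"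
  proof -
    have "measure_pmf.prob (Pi_pmf I dflt p) {f. R f} =
        measure_pmf.prob (Pi_pmf D dflt p) UNIV * measure_pmf.prob (Pi_pmf (I-D) dflt p) {f. R f}"
      by (simp only: eq measure_map_pmf 3 M_def prob_pair_times)
    thus ?thesis by (metis measure_pmf.prob_space space_measure_pmf mult_1_left)
  qed
  show ?thesis using a b c by simp
qed

lemma Pi_pmf_prob_indep:
  fixes p :: "'a \<Rightarrow> 'b pmf" and D :: "'k \<Rightarrow> 'a set" and Q :: "'k \<Rightarrow> ('a \<Rightarrow> 'b) \<Rightarrow> bool"
  assumes fin: "finite I" and K: "finite K" and DI: "\<And>k. k \<in> K \<Longrightarrow> D k \<subseteq> I"
    and disj: "disjoint_family_on D K"
    and Q: "\<And>k f g. k \<in> K \<Longrightarrow> (\<forall>x\<in>D k. f x = g x) \<Longrightarrow> Q k f = Q k g"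
  shows "measure_pmf.prob (Pi_pmf I dflt p) {f. \<forall>k\<in>K. Q k f} =
         (\<Prod>k\<in>K. measure_pmf.prob (Pi_pmf I dflt p) {f. Q k f})"
  using K DI disj Q
proof (induction K rule: finite_induct)
  case empty
  then show ?case by simp
next
  case (insert k0 K)
  have "{f. \<forall>k\<in>insert k0 K. Q k f} = {f. Q k0 f \<and> (\<forall>k\<in>K. Q k f)}" by auto
  also have "measure_pmf.prob (Pi_pmf I dflt p) \<dots> =
     measure_pmf.prob (Pi_pmf I dflt p) {f. Q k0 f} * measure_pmf.prob (Pi_pmf I dflt p) {f. \<forall>k\<in>K. Q k f}"
  proof (rule Pi_pmf_prob_split[OF fin])
    show "D k0 \<subseteq> I" using insert by auto
    show "\<And>f g. \<forall>x\<in>D k0. f x = g x \<Longrightarrow> Q k0 f = Q k0 g" using insert.prems by auto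
    show "(\<forall>k\<in>K. Q k f) = (\<forall>k\<in>K. Q k g)" if fg: "\<forall>x\<in>I - D k0. f x = g x" for f g
    proof -
      have "Q k f = Q k g" if k: "k \<in> K" for k
      proof (rule insert.prems(3))
        show "k \<in> insert k0 K" using k by auto
        have "D k \<inter> D k0 = {}" using insert.prems(2) k insert.hyps(2)
          unfolding disjoint_family_on_def by (metis insertCI)
        moreover have "D k \<subseteq> I" using insert.prems(1) k by auto
        ultimately show "\<forall>x\<in>D k. f x = g x" using fg by auto
      qed
      thus ?thesis by auto
    qed
  qed
  also have "measure_pmf.prob (Pi_pmf I dflt p) {f. \<forall>k\<in>K. Q k f} = (\<Prod>k\<in>K. measure_pmf.prob (Pi_pmf I dflt p) {f. Q k f})"
    using insert by (intro insert.IH) (auto simp: disjoint_family_on_def)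
  finally show ?case using insert.hyps by simp
qed

lemma Pi_pmf_bern_single:
  assumes "finite I" "e \<in> I" "0 \<le> q" "q \<le> 1"
  shows "measure_pmf.prob (Pi_pmf I False (\<lambda>_. bernoulli_pmf q)) {f. f e} = q"
proof -
  have "measure_pmf.prob (Pi_pmf I False (\<lambda>_. bernoulli_pmf q)) {f. f e} =
        measure_pmf.prob (map_pmf (\<lambda>f. f e) (Pi_pmf I False (\<lambda>_. bernoulli_pmf q))) {True}"
    by (simp add: vimage_def)
  also have "\<dots> = q" using assms by (subst Pi_pmf_component) (auto simp: measure_pmf_single)
  finally show ?thesis .
qed


lemma prob_pair_edges:
  assumes "finite I" "e1 \<in> I" "e2 \<in> I" "e1 \<noteq> e2" "0 \<le> q" "q \<le> 1"
  shows "measure_pmf.prob (Pi_pmf I False (\<lambda>_. bernoulli_pmf q)) {f. \<not> (f e1 \<and> f e2)} = 1 - q^2"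
proof -
  let ?M = "Pi_pmf I False (\<lambda>_. bernoulli_pmf q)"
  have "measure_pmf.prob ?M {f. f e1 \<and> f e2} = measure_pmf.prob ?M {f. \<forall>k\<in>{e1,e2}. f k}" by (simp add: conj_commute)
  also have "\<dots> = (\<Prod>k\<in>{e1,e2}. measure_pmf.prob ?M {f. f k})"
    by (rule Pi_pmf_prob_indep[where D = "\<lambda>k. {k}"]) (use assms in \<open>auto simp: disjoint_family_on_def\<close>)
  also have "\<dots> = q^2" using assms by (simp add: Pi_pmf_bern_single power2_eq_square)
  finally have 1: "measure_pmf.prob ?M {f. f e1 \<and> f e2} = q^2" .
  have "{f. \<not> (f e1 \<and> f e2)} = space (measure_pmf ?M) - {f. f e1 \<and> f e2}" by auto
  also have "measure_pmf.prob ?M \<dots> = 1 - measure_pmf.prob ?M {f. f e1 \<and> f e2}"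
    by (rule measure_pmf.prob_compl) simp
  finally show ?thesis using 1 by simp
qed

lemma Phi_e1: "\<Union> (hc_diff u ` {u, flip u a}) = {a}"
  using diff_flip[of u a] by (simp add: hc_diff_def)

lemma Phi_e2: "a \<noteq> b \<Longrightarrow> \<Union> (hc_diff u ` {flip u a, flip (flip u a) b}) = {a, b}"
  by (auto simp: diff_flip diff_flip2)

lemma edges_disj:
  assumes "a \<noteq> b" "a' \<noteq> b" "a \<noteq> a'"
  shows "{{u, flip u a}, {flip u a, flip (flip u a) b}} \<inter> {{u, flip u a'}, {flip u a', flip (flip u a') b}} = {}"
proof -
  have e1: "{u, flip u a} \<noteq> {u, flip u a'}" using Phi_e1[of u a] Phi_e1[of u a'] assms by force
  have e2: "{flip u a, flip (flip u a) b} \<noteq> {flip u a', flip (flip u a') b}"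
    using Phi_e2[of a b u] Phi_e2[of a' b u] assms by (metis doubleton_eq_iff)
  have e3: "{u, flip u a} \<noteq> {flip u a', flip (flip u a') b}"
    using Phi_e1[of u a] Phi_e2[of a' b u] assms by (metis doubleton_eq_iff singleton_insert_inj_eq)
  have e4: "{u, flip u a'} \<noteq> {flip u a, flip (flip u a) b}"
    using Phi_e1[of u a'] Phi_e2[of a b u] assms by (metis doubleton_eq_iff singleton_insert_inj_eq)
  show ?thesis using e1 e2 e3 e4 by auto
qed


lemma prob_not_Ev:
  assumes u: "u \<in> hc_vertices n" and A: "A \<subseteq> {0..<n}" and phi: "bij_betw \<phi> {0..<m} A"
    and q: "0 \<le> q" "q \<le> 1"
  shows "measure_pmf.prob (Pi_pmf (hc_edges n) False (\<lambda>_. bernoulli_pmf q)) {\<omega>. \<not> Ev \<phi> m u \<omega>}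
           \<le> 4 * m * (1 - q^2) ^ (m div 8)"
proof -
  let ?M = "Pi_pmf (hc_edges n) False (\<lambda>_. bernoulli_pmf q)"
  define t where "t = m div 8"
  define J where "J = {m div 2..<m}"
  define blk where "blk r = {r * t..<(r+1) * t}" for r
  define e1 where "e1 i = {u, flip u (\<phi> i)}" for i
  define e2 where "e2 i j = {flip u (\<phi> i), flip (flip u (\<phi> i)) (\<phi> j)}" for i j
  define S where "S jr = {\<omega>. \<forall>i\<in>blk (snd jr). \<not> (\<omega> (e1 i) \<and> \<omega> (e2 i (fst jr)))}" for jr
  have inj: "inj_on \<phi> {0..<m}" and img: "\<phi> ` {0..<m} = A" using phi by (auto simp: bij_betw_def)
  have blk_lt: "i < m div 2" if "i \<in> blk r" "r < 4" for i r
  proof -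
    have "(r + 1) * t \<le> 4 * t" using that by simp
    also have "4 * t \<le> m div 2" unfolding t_def by linarith
    finally show ?thesis using that unfolding blk_def by auto
  qed
  have sub: "{\<omega>. \<not> Ev \<phi> m u \<omega>} \<subseteq> (\<Union>jr\<in>J \<times> {0..<4::nat}. S jr)"
    unfolding Ev_def S_def J_def blk_def e1_def e2_def t_def by auto
  have Sjr: "measure_pmf.prob ?M (S jr) = (1 - q^2) ^ t" if jr: "jr \<in> J \<times> {0..<4::nat}" for jr
  proof -
    obtain j r where jr': "jr = (j, r)" "j \<in> J" "r < 4" using jr by auto
    have jm: "j \<in> {0..<m}" "j \<ge> m div 2" using jr' unfolding J_def by auto
    have iprops: "\<phi> i \<in> A \<and> \<phi> i \<noteq> \<phi> j" if "i \<in> blk r" for i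
    proof -
      have "i < m div 2" using blk_lt[OF that jr'(3)] .
      hence "i \<in> {0..<m}" "i \<noteq> j" using jm by auto
      thus ?thesis using jm img inj by (auto simp: inj_on_eq_iff)
    qed
    have jA: "\<phi> j \<in> A" using jm img by auto
    have edges: "e1 i \<in> hc_edges n" "e2 i j \<in> hc_edges n" "e1 i \<noteq> e2 i j" if "i \<in> blk r" for i
    proof -
      have an: "\<phi> i < n" "\<phi> j < n" using iprops[OF that] jA A by auto
      show "e1 i \<in> hc_edges n" unfolding e1_def by (rule edge_flip[OF u an(1)])
      show "e2 i j \<in> hc_edges n" unfolding e2_def by (rule edge_flip[OF flip_vertex[OF u an(1)] an(2)])
      have "\<phi> i \<noteq> \<phi> j" using iprops[OF that] by auto
      thus "e1 i \<noteq> e2 i j" unfolding e1_def e2_def using Phi_e1[of u "\<phi> i"] Phi_e2[of "\<phi> i" "\<phi> j" u]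
        by (metis doubleton_eq_iff singleton_insert_inj_eq)
    qed
    have "measure_pmf.prob ?M (S jr) = measure_pmf.prob ?M {\<omega>. \<forall>i\<in>blk r. \<not> (\<omega> (e1 i) \<and> \<omega> (e2 i j))}"
      unfolding S_def jr' by simp
    also have "\<dots> = (\<Prod>i\<in>blk r. measure_pmf.prob ?M {\<omega>. \<not> (\<omega> (e1 i) \<and> \<omega> (e2 i j))})"
    proof (rule Pi_pmf_prob_indep[where D = "\<lambda>i. {e1 i, e2 i j}"])
      show "finite (hc_edges n)" by (rule finite_edges)
      show "finite (blk r)" unfolding blk_def by simp
      show "{e1 i, e2 i j} \<subseteq> hc_edges n" if "i \<in> blk r" for i using edges[OF that] by auto
      show "disjoint_family_on (\<lambda>i. {e1 i, e2 i j}) (blk r)"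
      unfolding disjoint_family_on_def
      proof (intro ballI impI)
        fix i i' assume i: "i \<in> blk r" and i': "i' \<in> blk r" and ne: "i \<noteq> i'"
        have "i \<in> {0..<m}" "i' \<in> {0..<m}" using blk_lt[OF i jr'(3)] blk_lt[OF i' jr'(3)] by auto
        hence "\<phi> i \<noteq> \<phi> i'" using ne inj by (auto simp: inj_on_eq_iff)
        thus "{e1 i, e2 i j} \<inter> {e1 i', e2 i' j} = {}"
          unfolding e1_def e2_def using edges_disj iprops[OF i] iprops[OF i'] by metis
      qed
    qed auto
    also have "\<dots> = (\<Prod>i\<in>blk r. 1 - q^2)"
      by (intro prod.cong refl prob_pair_edges finite_edges) (use edges q in auto)
    also have "\<dots> = (1 - q^2) ^ t" unfolding blk_def by simp
    finally show ?thesis .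
  qed
  have "measure_pmf.prob ?M {\<omega>. \<not> Ev \<phi> m u \<omega>} \<le> measure_pmf.prob ?M (\<Union>jr\<in>J \<times> {0..<4::nat}. S jr)"
    by (rule measure_pmf.finite_measure_mono[OF sub]) simp
  also have "\<dots> \<le> (\<Sum>jr\<in>J \<times> {0..<4::nat}. measure_pmf.prob ?M (S jr))"
    by (rule measure_pmf.finite_measure_subadditive_finite) (auto simp: J_def)
  also have "\<dots> = (\<Sum>jr\<in>J \<times> {0..<4::nat}. (1 - q^2) ^ t)" by (intro sum.cong refl Sjr)
  also have "\<dots> = real (card J * 4) * (1 - q^2) ^ t" by (simp add: card_cartesian_product)
  also have "\<dots> \<le> real (4 * m) * (1 - q^2) ^ t"
  proof (rule mult_right_mono)
    show "real (card J * 4) \<le> real (4 * m)" unfolding J_def by simp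
    have "q^2 \<le> 1" using q by (simp add: power_le_one)
    thus "0 \<le> (1 - q^2) ^ t" by simp
  qed
  finally show ?thesis unfolding t_def by simp
qed


lemma Ev_cong:
  assumes "\<And>i j. i < j \<Longrightarrow> j < m \<Longrightarrow> f {u, flip u (\<phi> i)} = g {u, flip u (\<phi> i)} \<and>
             f {flip u (\<phi> i), flip (flip u (\<phi> i)) (\<phi> j)} = g {flip u (\<phi> i), flip (flip u (\<phi> i)) (\<phi> j)}"
  shows "Ev \<phi> m u f = Ev \<phi> m u g"
  unfolding Ev_def
proof (intro ball_cong bex_cong refl)
  fix j r i assume j: "j \<in> {m div 2..<m}" and r: "r \<in> {0..<(4::nat)}" and i: "i \<in> {r * (m div 8)..<(r + 1) * (m div 8)}"
  have "(r + 1) * (m div 8) \<le> 4 * (m div 8)" using r by simp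
  also have "4 * (m div 8) \<le> m div 2" by linarith
  finally have "i < j" "j < m" using i j by auto
  from assms[OF this] show "(f {u, flip u (\<phi> i)} \<and> f {flip u (\<phi> i), flip (flip u (\<phi> i)) (\<phi> j)}) =
       (g {u, flip u (\<phi> i)} \<and> g {flip u (\<phi> i), flip (flip u (\<phi> i)) (\<phi> j)})" by simp
qed

lemma main_bound:
  assumes A: "A \<subseteq> {0..<n}" and B: "B \<subseteq> {0..<n}" and AB: "A \<inter> B = {}" and cB: "card B = m"
    and phi: "bij_betw \<phi> {0..<m} A" and q: "0 \<le> q" "q \<le> 1"
  shows "1 - 2^n * (4 * m * (1 - q^2) ^ (m div 8)) ^ m \<le>
    measure_pmf.prob (Pi_pmf (hc_edges n) False (\<lambda>_. bernoulli_pmf q))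
      {\<omega>. \<forall>v \<in> hc_vertices n. \<exists>u \<in> hc_vertices n.
                 card (hc_diff v u) = 1 \<and> hc_diff v u \<subseteq> B \<and> good_vertex n \<omega> A m u}"
proof -
  let ?M = "Pi_pmf (hc_edges n) False (\<lambda>_. bernoulli_pmf q)"
  let ?V = "hc_vertices n"
  define G where "G = {\<omega>. \<forall>v \<in> ?V. \<exists>u \<in> ?V. card (hc_diff v u) = 1 \<and> hc_diff v u \<subseteq> B \<and> good_vertex n \<omega> A m u}"
  define Bad where "Bad v = {\<omega>. \<forall>b\<in>B. \<not> Ev \<phi> m (flip v b) \<omega>}" for v
  define q0 where "q0 = 4 * m * (1 - q^2) ^ (m div 8)"
  have inj: "inj_on \<phi> {0..<m}" and img: "\<phi> ` {0..<m} = A" using phi by (auto simp: bij_betw_def)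
  have finB: "finite B" using B finite_subset by blast
  have q0: "0 \<le> q0"
  proof -
    have "q^2 \<le> 1" using q by (simp add: power_le_one)
    thus ?thesis unfolding q0_def by simp
  qed
  have sub: "space (measure_pmf ?M) - G \<subseteq> (\<Union>v\<in>?V. Bad v)"
  proof
    fix \<omega> assume "\<omega> \<in> space (measure_pmf ?M) - G"
    then obtain v where v: "v \<in> ?V" and nv: "\<forall>u \<in> ?V. \<not> (card (hc_diff v u) = 1 \<and> hc_diff v u \<subseteq> B \<and> good_vertex n \<omega> A m u)"
      unfolding G_def by auto
    have "\<omega> \<in> Bad v"
      unfolding Bad_def
    proof (intro CollectI ballI notI)
      fix b assume b: "b \<in> B" and E: "Ev \<phi> m (flip v b) \<omega>"
      have bn: "b < n" using b B by auto
      have fv: "flip v b \<in> ?V" by (rule flip_vertex[OF v bn])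
      have "good_vertex n \<omega> A m (flip v b)" by (rule Ev_good[OF fv A phi E])
      thus False using nv fv b by (auto simp: diff_flip)
    qed
    thus "\<omega> \<in> (\<Union>v\<in>?V. Bad v)" using v by auto
  qed
  have probBad: "measure_pmf.prob ?M (Bad v) \<le> q0 ^ m" if v: "v \<in> ?V" for v
  proof -
    define D where "D b = {e \<in> hc_edges n. \<forall>x\<in>e. hc_diff x (flip v b) \<subseteq> A}" for b
    have "measure_pmf.prob ?M (Bad v) = (\<Prod>b\<in>B. measure_pmf.prob ?M {\<omega>. \<not> Ev \<phi> m (flip v b) \<omega>})"
      unfolding Bad_def
    proof (rule Pi_pmf_prob_indep[where D = D])
      show "finite (hc_edges n)" by (rule finite_edges)
      show "finite B" by fact
      show "D b \<subseteq> hc_edges n" for b unfolding D_def by auto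
      show "disjoint_family_on D B"
        unfolding disjoint_family_on_def
      proof (intro ballI impI)
        fix b b' assume b: "b \<in> B" and b': "b' \<in> B" and ne: "b \<noteq> b'"
        show "D b \<inter> D b' = {}"
        proof (rule ccontr)
          assume "D b \<inter> D b' \<noteq> {}"
          then obtain e where e: "e \<in> D b" "e \<in> D b'" by auto
          then obtain x where x: "x \<in> e" using edge_nonempty unfolding D_def by blast
          have "hc_diff x (flip v b) \<subseteq> A" "hc_diff x (flip v b') \<subseteq> A" using e x unfolding D_def by auto
          hence "hc_diff (flip v b) (flip v b') \<subseteq> A"
            using hc_diff_tri[of "flip v b" "flip v b'" x] hc_diff_sym[of x "flip v b"] by auto
          hence "b \<in> A" using diff_flip_flip[OF ne] by auto
          thus False using b AB by auto
        qed
      qed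
      show "(\<not> Ev \<phi> m (flip v b) f) = (\<not> Ev \<phi> m (flip v b) g)"
        if b: "b \<in> B" and fg: "\<forall>x\<in>D b. f x = g x" for b f g
      proof -
        let ?u = "flip v b"
        have u: "?u \<in> ?V" using flip_vertex[OF v] b B by auto
        have "Ev \<phi> m ?u f = Ev \<phi> m ?u g"
        proof (rule Ev_cong)
          fix i j assume ij: "i < j" "j < m"
          have ab: "\<phi> i \<in> A" "\<phi> j \<in> A" "\<phi> i \<noteq> \<phi> j" using ij img inj by (auto simp: inj_on_eq_iff)
          have an: "\<phi> i < n" "\<phi> j < n" using ab A by auto
          have d1: "{?u, flip ?u (\<phi> i)} \<in> D b"
          proof -
            have "hc_diff ?u ?u = {}" by (simp add: hc_diff_def)
            moreover have "hc_diff (flip ?u (\<phi> i)) ?u = {\<phi> i}" using diff_flip hc_diff_sym by metis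
            ultimately show ?thesis unfolding D_def using edge_flip[OF u an(1)] ab by auto
          qed
          have d2: "{flip ?u (\<phi> i), flip (flip ?u (\<phi> i)) (\<phi> j)} \<in> D b"
            unfolding D_def using edge_flip[OF flip_vertex[OF u an(1)] an(2)] diff_flip[of ?u "\<phi> i"]
              diff_flip2[OF ab(3), of ?u] ab
            by (auto simp: hc_diff_sym)
          show "f {?u, flip ?u (\<phi> i)} = g {?u, flip ?u (\<phi> i)} \<and>
             f {flip ?u (\<phi> i), flip (flip ?u (\<phi> i)) (\<phi> j)} = g {flip ?u (\<phi> i), flip (flip ?u (\<phi> i)) (\<phi> j)}"
            using fg d1 d2 by auto
        qed
        thus ?thesis by simp
      qed
    qed
    also have "\<dots> \<le> (\<Prod>b\<in>B. q0)"
    proof (rule prod_mono)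
      fix b assume b: "b \<in> B"
      have u: "flip v b \<in> ?V" using flip_vertex[OF v] b B by auto
      show "0 \<le> measure_pmf.prob ?M {\<omega>. \<not> Ev \<phi> m (flip v b) \<omega>} \<and> measure_pmf.prob ?M {\<omega>. \<not> Ev \<phi> m (flip v b) \<omega>} \<le> q0"
        using prob_not_Ev[OF u A phi q] unfolding q0_def by simp
    qed
    also have "\<dots> = q0 ^ m" using cB by simp
    finally show ?thesis .
  qed
  have "measure_pmf.prob ?M (space (measure_pmf ?M) - G) \<le> measure_pmf.prob ?M (\<Union>v\<in>?V. Bad v)"
    by (rule measure_pmf.finite_measure_mono[OF sub]) simp
  also have "\<dots> \<le> (\<Sum>v\<in>?V. measure_pmf.prob ?M (Bad v))"
    by (rule measure_pmf.finite_measure_subadditive_finite) (auto simp: finite_vertices)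
  also have "\<dots> \<le> (\<Sum>v\<in>?V. q0 ^ m)" by (intro sum_mono probBad)
  also have "\<dots> = 2^n * q0^m" by (simp add: card_vertices)
  finally have "measure_pmf.prob ?M (space (measure_pmf ?M) - G) \<le> 2^n * q0^m" .
  moreover have "measure_pmf.prob ?M (space (measure_pmf ?M) - G) = 1 - measure_pmf.prob ?M G"
    by (rule measure_pmf.prob_compl) simp
  ultimately show ?thesis unfolding G_def q0_def by simp
qed



lemma div_upper:
  fixes c n :: nat assumes c: "c \<ge> 1"
  shows "n \<le> c * ((n - 1) div c) + c"
proof -
  define k where "k = (n - 1) div c"
  define r where "r = (n - 1) mod c"
  have d: "c * k + r = n - 1" unfolding k_def r_def by (metis mult.commute div_mult_mod_eq)
  have "r < c" using c unfolding r_def by simp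
  hence "n \<le> c * k + c" using d by linarith
  thus ?thesis unfolding k_def .
qed

lemma t_lower:
  fixes c n :: nat assumes c: "c \<ge> 1"
  shows "real n / (8 * c) - 2 \<le> real ((n - 1) div c div 8)"
proof -
  define mm where "mm = (n - 1) div c"
  have "n \<le> c * mm + c" unfolding mm_def by (rule div_upper[OF c])
  hence "real n \<le> real c * (real mm + 1)" by (simp add: distrib_left flip: of_nat_mult of_nat_add)
  hence m1: "real n / real c \<le> real mm + 1" using c by (simp add: pos_divide_le_eq mult.commute)
  have "mm \<le> 8 * (mm div 8) + 7" by simp
  hence m2: "real mm \<le> 8 * real (mm div 8) + 7" by (simp flip: of_nat_mult of_nat_add)
  have "real n / (8 * c) = (real n / real c) / 8" by simp
  thus ?thesis using m1 m2 unfolding mm_def by linarith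
qed

lemma q_to_zero:
  fixes \<alpha> :: real and c :: nat
  assumes a: "0 < \<alpha>" "\<alpha> < 1/2" and c: "c \<ge> 1"
  shows "(\<lambda>n. 4 * real ((n - 1) div c) * (1 - (real n powr (-\<alpha>))^2) ^ ((n - 1) div c div 8)) \<longlonglongrightarrow> 0"
proof (rule tendsto_sandwich[where f = "\<lambda>_. 0"])
  let ?g = "\<lambda>n::nat. 4 * real n * exp 2 * exp (- (real n powr (1 - 2*\<alpha>)) / (8 * real c))"
  have "1 - 2*\<alpha> > 0" using a by simp
  moreover have "real c > 0" using c by simp
  ultimately show "?g \<longlonglongrightarrow> 0" by real_asymp
  show "((\<lambda>_. 0) \<longlongrightarrow> 0) sequentially" by simp
  show "eventually (\<lambda>n. 0 \<le> 4 * real ((n - 1) div c) * (1 - (real n powr (-\<alpha>))^2) ^ ((n - 1) div c div 8)) sequentially"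
  proof (intro eventually_sequentiallyI[of 1])
    fix n :: nat assume n: "n \<ge> 1"
    have "real n powr (-\<alpha>) \<le> 1" using n a by (simp add: powr_minus divide_simps ge_one_powr_ge_zero)
    hence "(real n powr (-\<alpha>))^2 \<le> 1" by (simp add: power_le_one)
    thus "0 \<le> 4 * real ((n - 1) div c) * (1 - (real n powr (-\<alpha>))^2) ^ ((n - 1) div c div 8)" by simp
  qed
  show "eventually (\<lambda>n. 4 * real ((n - 1) div c) * (1 - (real n powr (-\<alpha>))^2) ^ ((n - 1) div c div 8) \<le> ?g n) sequentially"
  proof (intro eventually_sequentiallyI[of 1])
    fix n :: nat assume n: "n \<ge> 1"
    define p2 where "p2 = real n powr (-2*\<alpha>)"
    define t where "t = (n - 1) div c div 8"
    have p2eq: "(real n powr (-\<alpha>))^2 = p2" unfolding p2_def using n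
      by (simp add: power2_eq_square powr_add[symmetric])
    have p2n: "p2 * real n = real n powr (1 - 2*\<alpha>)"
    proof -
      have "real n powr (1 - 2*\<alpha>) = real n powr (-2*\<alpha> + 1)" by simp
      also have "\<dots> = real n powr (-2*\<alpha>) * real n powr 1" by (rule powr_add)
      also have "\<dots> = p2 * real n" unfolding p2_def using n by simp
      finally show ?thesis by simp
    qed
    have p20: "0 \<le> p2" unfolding p2_def by simp
    have p21: "p2 \<le> 1" unfolding p2_def using n a by (simp add: powr_minus divide_simps ge_one_powr_ge_zero)
    have "(1 - p2) ^ t \<le> exp (- p2) ^ t"
      by (rule power_mono) (use p21 exp_ge_add_one_self[of "-p2"] in auto)
    also have "\<dots> = exp (- p2 * real t)" by (simp add: exp_of_nat_mult[symmetric] mult.commute)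
    also have "\<dots> \<le> exp (2 - real n powr (1 - 2*\<alpha>) / (8 * real c))"
    proof -
      have "p2 * (real n / (8 * c) - 2) \<le> p2 * real t"
        unfolding t_def by (rule mult_left_mono[OF t_lower[OF c] p20])
      moreover have "p2 * (real n / (8 * c) - 2) = real n powr (1 - 2*\<alpha>) / (8 * real c) - 2 * p2"
        using p2n by (simp add: field_simps)
      ultimately show ?thesis using p21 by simp
    qed
    also have "\<dots> = exp 2 * exp (- (real n powr (1 - 2*\<alpha>)) / (8 * real c))"
      by (simp add: exp_add[symmetric] exp_diff)
    finally have e: "(1 - p2) ^ t \<le> exp 2 * exp (- (real n powr (1 - 2*\<alpha>)) / (8 * real c))" .
    have "(n - 1) div c \<le> n" using div_le_dividend[of "n - 1" c] by linarith
    hence mn: "real ((n - 1) div c) \<le> real n" by simp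
    have "4 * real ((n - 1) div c) * (1 - p2) ^ t \<le> 4 * real n * (exp 2 * exp (- (real n powr (1 - 2*\<alpha>)) / (8 * real c)))"
      by (rule mult_mono) (use mn e p21 in auto)
    thus "4 * real ((n - 1) div c) * (1 - (real n powr (-\<alpha>))^2) ^ ((n - 1) div c div 8) \<le> ?g n"
      unfolding p2eq t_def[symmetric] by (simp add: mult.assoc)
  qed
qed


lemma mm_at_top:
  fixes c :: nat assumes c: "c \<ge> 1"
  shows "filterlim (\<lambda>n::nat. (n - 1) div c) at_top sequentially"
proof (rule filterlim_at_top[THEN iffD2], intro allI)
  fix Z :: nat
  show "eventually (\<lambda>n. Z \<le> (n - 1) div c) sequentially"
  proof (intro eventually_sequentiallyI[of "c * Z + 1"])
    fix n assume "c * Z + 1 \<le> n"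
    hence "c * Z \<le> n - 1" by simp
    hence "(c * Z) div c \<le> (n - 1) div c" by (rule div_le_mono)
    thus "Z \<le> (n - 1) div c" using c by simp
  qed
qed

lemma b_to_zero:
  fixes \<alpha> :: real and c :: nat
  assumes a: "0 < \<alpha>" "\<alpha> < 1/2" and c: "c \<ge> 1"
  shows "(\<lambda>n. 2^n * (4 * real ((n - 1) div c) * (1 - (real n powr (-\<alpha>))^2) ^ ((n - 1) div c div 8)) ^ ((n - 1) div c)) \<longlonglongrightarrow> 0"
proof -
  define q where "q n = 4 * real ((n - 1) div c) * (1 - (real n powr (-\<alpha>))^2) ^ ((n - 1) div c div 8)" for n :: nat
  define mm where "mm n = (n - 1) div c" for n :: nat
  have qlim: "q \<longlonglongrightarrow> 0" unfolding q_def by (rule q_to_zero[OF a c])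
  have ev1: "eventually (\<lambda>n. q n < 1 / (2 * 2^c)) sequentially"
    by (rule order_tendstoD(2)[OF qlim]) simp
  have ev0: "eventually (\<lambda>n. 0 \<le> q n) sequentially"
  proof (intro eventually_sequentiallyI[of 1])
    fix n :: nat assume n: "n \<ge> 1"
    have "real n powr (-\<alpha>) \<le> 1" using n a by (simp add: powr_minus divide_simps ge_one_powr_ge_zero)
    hence "(real n powr (-\<alpha>))^2 \<le> 1" by (simp add: power_le_one)
    thus "0 \<le> q n" unfolding q_def by simp
  qed
  have hlim: "(\<lambda>n. 2^(c+1) * (1/2::real) ^ mm n) \<longlonglongrightarrow> 0"
    using tendsto_power_zero[OF mm_at_top[OF c], of "1/2::real"] unfolding mm_def
    by (auto intro: tendsto_mult_right_zero)
  have "(\<lambda>n. (2::real)^n * q n ^ mm n) \<longlonglongrightarrow> 0"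
  proof (rule tendsto_sandwich[where f = "\<lambda>_. 0" and h = "\<lambda>n. 2^(c+1) * (1/2::real) ^ mm n"])
    show "((\<lambda>_. 0) \<longlongrightarrow> 0) sequentially" by simp
    show "(\<lambda>n. 2^(c+1) * (1/2::real) ^ mm n) \<longlonglongrightarrow> 0" by (rule hlim)
    show "eventually (\<lambda>n. 0 \<le> 2^n * q n ^ mm n) sequentially"
      using ev0 by eventually_elim simp
    show "eventually (\<lambda>n. 2^n * q n ^ mm n \<le> 2^(c+1) * (1/2::real) ^ mm n) sequentially"
      using ev0 ev1
    proof eventually_elim
      case (elim n)
      have "n \<le> c * mm n + c" unfolding mm_def by (rule div_upper[OF c])
      hence "n \<le> c * mm n + (c + 1)" by simp
      hence "(2::real)^n \<le> 2^(c * mm n + (c + 1))" by (rule power_increasing) simp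
      also have "\<dots> = 2^(c+1) * (2^c)^mm n" by (simp add: power_add power_mult)
      finally have "(2::real)^n * q n ^ mm n \<le> 2^(c+1) * (2^c)^mm n * q n ^ mm n"
        using elim by (intro mult_right_mono) auto
      also have "\<dots> = 2^(c+1) * (2^c * q n) ^ mm n" by (simp add: power_mult_distrib)
      also have "\<dots> \<le> 2^(c+1) * (1/2) ^ mm n"
      proof -
        have "2^c * q n \<le> 1/2" using elim by (simp add: field_simps)
        hence "(2^c * q n) ^ mm n \<le> (1/2) ^ mm n" by (intro power_mono) (use elim in auto)
        thus ?thesis by simp
      qed
      finally show ?case .
    qed
  qed
  thus ?thesis unfolding q_def mm_def .
qed

theorem mainTheorem4:
  fixes \<alpha> :: real and l :: nat and m :: "nat \<Rightarrow> nat"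
    and F :: "nat \<Rightarrow> nat \<Rightarrow> nat set"
  assumes "0 < \<alpha>" and "\<alpha> < 1/2" and "l \<ge> 1"
    and "\<And>n. m n = (n - 1) div (l + 2)"
    and "\<And>n. disjoint_family_on (F n) {..<l+2}"
    and "\<And>n i. i < l + 2 \<Longrightarrow> F n i \<subseteq> {0..<n} \<and> card (F n i) = m n"
  shows "(\<lambda>n. measure_pmf.prob (percolation n (real n powr (-\<alpha>)))
            {\<omega>. \<forall>v \<in> hc_vertices n. \<exists>u \<in> hc_vertices n.
                 card (hc_diff v u) = 1 \<and> hc_diff v u \<subseteq> F n 1 \<and>
                 good_vertex n \<omega> (F n 0) (m n) u})
         \<longlonglongrightarrow> 1"
proof -
  note a = assms(1,2)
  have c: "l + 2 \<ge> 1" by simp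
  define P where "P n = measure_pmf.prob (percolation n (real n powr (-\<alpha>)))
            {\<omega>. \<forall>v \<in> hc_vertices n. \<exists>u \<in> hc_vertices n.
                 card (hc_diff v u) = 1 \<and> hc_diff v u \<subseteq> F n 1 \<and>
                 good_vertex n \<omega> (F n 0) (m n) u}" for n
  define b where "b n = 2^n * (4 * real ((n - 1) div (l + 2)) * (1 - (real n powr (-\<alpha>))^2) ^ ((n - 1) div (l + 2) div 8)) ^ ((n - 1) div (l + 2))" for n :: nat
  have blim: "b \<longlonglongrightarrow> 0" unfolding b_def by (rule b_to_zero[OF a c])
  have lower: "1 - b n \<le> P n" for n
  proof -
    have F0: "F n 0 \<subseteq> {0..<n}" "card (F n 0) = m n" using assms(6)[of 0 n] by auto
    have F1: "F n 1 \<subseteq> {0..<n}" "card (F n 1) = m n" using assms(6)[of 1 n] by auto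
    have disj: "F n 0 \<inter> F n 1 = {}" using assms(5)[of n] unfolding disjoint_family_on_def by auto
    have "finite (F n 0)" using F0 finite_subset by blast
    then obtain \<phi> where phi: "bij_betw \<phi> {0..<m n} (F n 0)"
      using ex_bij_betw_nat_finite F0(2) by metis
    have q0: "0 \<le> real n powr (-\<alpha>)" by simp
    have q1: "real n powr (-\<alpha>) \<le> 1"
    proof (cases "n = 0")
      case False
      thus ?thesis using a by (simp add: powr_minus divide_simps ge_one_powr_ge_zero)
    qed simp
    have "1 - b n = 1 - 2^n * (4 * real (m n) * (1 - (real n powr (-\<alpha>))^2) ^ (m n div 8)) ^ m n"
      unfolding b_def assms(4) ..
    also have "\<dots> \<le> P n"
      unfolding P_def percolation_def by (rule main_bound[OF F0(1) F1(1) disj F1(2) phi q0 q1])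
    finally show ?thesis .
  qed
  have upper: "P n \<le> 1" for n unfolding P_def by simp
  have "P \<longlonglongrightarrow> 1"
  proof (rule tendsto_sandwich[where f = "\<lambda>n. 1 - b n" and h = "\<lambda>_. 1"])
    show "eventually (\<lambda>n. 1 - b n \<le> P n) sequentially" using lower by simp
    show "eventually (\<lambda>n. P n \<le> 1) sequentially" using upper by simp
    show "(\<lambda>n. 1 - b n) \<longlonglongrightarrow> 1" using tendsto_diff[OF tendsto_const blim, of 1] by simp
    show "((\<lambda>_. 1) \<longlongrightarrow> (1::real)) sequentially" by simp
  qed
  thus ?thesis unfolding P_def .
qed

end
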